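(* Let $4\le k\le\infty$. Suppose that a simplicial complex $X$ is obtained from two flag simplicial complexes $A$ and $B$ by gluing them along a simplex. Then $X$ is $k$-large if and only if both $A$ and $B$ are $k$-large.
   Context: A simplicial complex is flag if every set of pairwise adjacent vertices spans a simplex. A cycle in a complex is a subcomplex that is a subdivision of the circle; a subcomplex is full if every simplex of the ambient complex spanned by its vertices lies in it. For $4\le k\le\infty$, a flag simplicial complex is $k$-large if it has no full cycle of length $<k$. *)

theory Defs
  imports Main "HOL-Library.Extended_Nat"
begin

text \<open>Abstract simplicial complexes: a set of finite nonempty vertex sets (simplices),
closed under passing to nonempty subsets.  Vertices are the singleton simplices.\<close>
definition simplicial_complex :: "'a set set \<Rightarrow> bool" where
  "simplicial_complex K \<longleftrightarrow>
     (\<forall>s\<in>K. finite s \<and> s \<noteq> {}) \<and> (\<forall>s\<in>K. \<forall>t. t \<subseteq> s \<and> t \<noteq> {} \<longrightarrow> t \<in> K)"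

definition flag :: "'a set set \<Rightarrow> bool" where
  "flag K \<longleftrightarrow> simplicial_complex K \<and>
     (\<forall>s. finite s \<and> s \<noteq> {} \<and> (\<forall>u\<in>s. \<forall>v\<in>s. {u, v} \<in> K) \<longrightarrow> s \<in> K)"

definition is_cycle :: "'a set set \<Rightarrow> nat \<Rightarrow> bool" where
  "is_cycle C n \<longleftrightarrow> (\<exists>f :: nat \<Rightarrow> 'a. 3 \<le> n \<and> inj_on f {..<n} \<and>
     C = {{f i} | i. i < n} \<union> {{f i, f (Suc i mod n)} | i. i < n})"

definition full_subcomplex :: "'a set set \<Rightarrow> 'a set set \<Rightarrow> bool" where
  "full_subcomplex K C \<longleftrightarrow> C \<subseteq> K \<and> (\<forall>s\<in>K. s \<subseteq> \<Union>C \<longrightarrow> s \<in> C)"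

definition k_large :: "'a set set \<Rightarrow> enat \<Rightarrow> bool" where
  "k_large K k \<longleftrightarrow> flag K \<and>
     \<not> (\<exists>C n. is_cycle C n \<and> full_subcomplex K C \<and> enat n < k)"

end

theory Submission
  imports Defs
begin

lemma first_change: "P (i::nat) \<Longrightarrow> \<not> P j \<Longrightarrow> i < j \<Longrightarrow> \<exists>p. i < p \<and> p \<le> j \<and> \<not> P p \<and> P (p - 1)"
proof (induction j)
  case 0 then show ?case by simp
next
  case (Suc j)
  show ?case
  proof (cases "P j")
    case True then show ?thesis using Suc.prems by (intro exI[of _ "Suc j"]) auto
  next
    case False
    then have "i < j" using Suc.prems by (cases "i = j") auto
    then show ?thesis using Suc.IH[OF Suc.prems(1) False] by auto
  qed
qed

lemma suc_mod: "w < (n::nat) \<Longrightarrow> Suc w mod n = (if Suc w = n then 0 else Suc w)"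
  by auto

lemma comb:
  fixes PA PB :: "nat \<Rightarrow> bool" and n :: nat
  assumes cov: "\<forall>u<n. PA u \<or> PB u"
    and edge: "\<forall>u<n. \<not>(PA u \<and> \<not>PB u \<and> PB (Suc u mod n) \<and> \<not>PA (Suc u mod n)) \<and>
                      \<not>(PB u \<and> \<not>PA u \<and> PA (Suc u mod n) \<and> \<not>PB (Suc u mod n))"
    and ij: "i < j" "j < n" "PA i" "\<not> PB i" "PB j" "\<not> PA j"
  shows "\<exists>p q. p < n \<and> q < n \<and> PA p \<and> PB p \<and> PA q \<and> PB q \<and> p \<noteq> q \<and>
     (\<forall>w<n. {p, q} \<noteq> {w, Suc w mod n})"
proof -
  obtain p where p: "i < p" "p \<le> j" "PB p" "\<not> PB (p - 1)"
    using first_change[of "\<lambda>u. \<not> PB u" i j] ij by auto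
  have "PA (p - 1)" using cov[rule_format, of "p - 1"] p ij by auto
  moreover have "Suc (p - 1) mod n = p" using p ij by auto
  ultimately have "PA p" using edge[rule_format, of "p - 1"] p ij by auto
  then have pj: "p < j" using p ij by (cases "p = j") auto
  show ?thesis
  proof (cases "\<exists>u. j < u \<and> u < n \<and> PA u")
    case True
    then obtain u where u: "j < u" "u < n" "PA u" by auto
    obtain q where q: "j < q" "q \<le> u" "PA q" "\<not> PA (q - 1)"
      using first_change[of "\<lambda>u. \<not> PA u" j u] ij u by auto
    have "PB (q - 1)" using cov[rule_format, of "q - 1"] q u by auto
    moreover have "Suc (q - 1) mod n = q" using q u by auto
    ultimately have "PB q" using edge[rule_format, of "q - 1"] q u by auto
    moreover have "\<forall>w<n. {p, q} \<noteq> {w, Suc w mod n}"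
    proof (intro allI impI notI)
      fix w assume w: "w < n" "{p, q} = {w, Suc w mod n}"
      then show False using suc_mod[OF w(1)] p pj q u ij by (auto simp: doubleton_eq_iff split: if_splits)
    qed
    ultimately show ?thesis using \<open>PA p\<close> p q u pj ij by (intro exI[of _ p] exI[of _ q]) auto
  next
    case False
    have n1: "\<not> PA (n - 1)" using False ij by (cases "n - 1 = j") auto
    have "PB (n - 1)" using n1 cov[rule_format, of "n - 1"] ij by auto
    moreover have "Suc (n - 1) mod n = 0" using ij by auto
    ultimately have a0: "\<not> (PA 0 \<and> \<not> PB 0)" using edge[rule_format, of "n - 1"] n1 ij by auto
    then have i0: "0 < i" using ij by (cases i) auto
    obtain q where q: "q < i" "PA q" "PB q"
    proof (cases "PA 0")
      case True then show ?thesis using that a0 i0 by auto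
    next
      case False
      obtain q where q: "0 < q" "q \<le> i" "PA q" "\<not> PA (q - 1)"
        using first_change[of "\<lambda>u. \<not> PA u" 0 i] ij i0 False by auto
      have "PB (q - 1)" using cov[rule_format, of "q - 1"] q ij by auto
      moreover have "Suc (q - 1) mod n = q" using q ij by auto
      ultimately have "PB q" using edge[rule_format, of "q - 1"] q ij by auto
      moreover have "q \<noteq> i" using ij \<open>PB q\<close> by auto
      ultimately show ?thesis using that[of q] q by auto
    qed
    have "\<forall>w<n. {p, q} \<noteq> {w, Suc w mod n}"
    proof (intro allI impI notI)
      fix w assume w: "w < n" "{p, q} = {w, Suc w mod n}"
      then show False using suc_mod[OF w(1)] p pj q ij by (auto simp: doubleton_eq_iff split: if_splits)
    qed
    then show ?thesis using \<open>PA p\<close> p q pj ij by (intro exI[of _ p] exI[of _ q]) auto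
  qed
qed

lemma sc_sub: "simplicial_complex K \<Longrightarrow> s \<in> K \<Longrightarrow> t \<subseteq> s \<Longrightarrow> t \<noteq> {} \<Longrightarrow> t \<in> K"
  unfolding simplicial_complex_def by blast

lemma sc_ne: "simplicial_complex K \<Longrightarrow> s \<in> K \<Longrightarrow> s \<noteq> {}"
  unfolding simplicial_complex_def by blast

lemma move_to_A:
  assumes "simplicial_complex B" "A \<inter> B = {\<tau>. \<tau> \<subseteq> \<sigma> \<and> \<tau> \<noteq> {}}"
    and "x \<in> B" "\<forall>y\<in>x. {y} \<in> A"
  shows "x \<in> A"
proof -
  have "x \<subseteq> \<sigma>"
  proof
    fix y assume y: "y \<in> x"
    then have "{y} \<in> B" using sc_sub[OF assms(1,3)] by auto
    then have "{y} \<in> A \<inter> B" using assms(4) y by auto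
    then show "y \<in> \<sigma>" using assms(2) by auto
  qed
  then have "x \<in> A \<inter> B" using assms(2) sc_ne[OF assms(1,3)] by auto
  then show ?thesis by auto
qed

lemma X_flag:
  assumes "flag A" "flag B" "A \<inter> B = {\<tau>. \<tau> \<subseteq> \<sigma> \<and> \<tau> \<noteq> {}}"
  shows "flag (A \<union> B)"
proof -
  have scA: "simplicial_complex A" and scB: "simplicial_complex B" using assms(1,2) unfolding flag_def by blast+
  have sc: "simplicial_complex (A \<union> B)" using scA scB unfolding simplicial_complex_def by (metis Un_iff)
  have edgeA: "{u} \<in> A \<and> {v} \<in> A" if "{u, v} \<in> A" for u v using sc_sub[OF scA that] by auto
  have edgeB: "{u} \<in> B \<and> {v} \<in> B" if "{u, v} \<in> B" for u v using sc_sub[OF scB that] by auto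
  have "s \<in> A \<union> B" if s: "finite s" "s \<noteq> {}" "\<forall>u\<in>s. \<forall>v\<in>s. {u, v} \<in> A \<union> B" for s
  proof (cases "\<forall>u\<in>s. {u} \<in> A")
    case True
    have "\<forall>u\<in>s. \<forall>v\<in>s. {u, v} \<in> A"
    proof (intro ballI)
      fix u v assume uv: "u \<in> s" "v \<in> s"
      then have "{u, v} \<in> A \<union> B" using s by auto
      then show "{u, v} \<in> A" using move_to_A[OF scB assms(3), of "{u,v}"] True uv by auto
    qed
    then show ?thesis using assms(1) s unfolding flag_def by blast
  next
    case False
    then obtain u where u: "u \<in> s" "{u} \<notin> A" by auto
    have allB: "\<forall>v\<in>s. {v} \<in> B"
    proof
      fix v assume v: "v \<in> s"
      then have "{u, v} \<in> A \<union> B" using s u by auto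
      then show "{v} \<in> B" using edgeA edgeB u by blast
    qed
    have iB: "B \<inter> A = {\<tau>. \<tau> \<subseteq> \<sigma> \<and> \<tau> \<noteq> {}}" using assms(3) by blast
    have "\<forall>u\<in>s. \<forall>v\<in>s. {u, v} \<in> B"
    proof (intro ballI)
      fix u v assume uv: "u \<in> s" "v \<in> s"
      then have "{u, v} \<in> A \<union> B" using s by auto
      then show "{u, v} \<in> B" using move_to_A[OF scA iB, of "{u,v}"] allB uv by auto
    qed
    then show ?thesis using assms(2) s unfolding flag_def by blast
  qed
  then show ?thesis using sc unfolding flag_def by blast
qed

lemma full_up:
  assumes "simplicial_complex B" "simplicial_complex A" "A \<inter> B = {\<tau>. \<tau> \<subseteq> \<sigma> \<and> \<tau> \<noteq> {}}"
    and "full_subcomplex A C"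
  shows "full_subcomplex (A \<union> B) C"
  unfolding full_subcomplex_def
proof (intro conjI ballI impI)
  show "C \<subseteq> A \<union> B" using assms(4) unfolding full_subcomplex_def by auto
  fix s assume s: "s \<in> A \<union> B" "s \<subseteq> \<Union> C"
  have "s \<in> A"
  proof (cases "s \<in> A")
    case False
    then have sB: "s \<in> B" using s by auto
    have "\<forall>y\<in>s. {y} \<in> A"
    proof
      fix y assume "y \<in> s"
      then obtain c where c: "c \<in> C" "y \<in> c" using s by auto
      then have "c \<in> A" using assms(4) unfolding full_subcomplex_def by auto
      then show "{y} \<in> A" using sc_sub[OF assms(2), of c "{y}"] c by auto
    qed
    then show ?thesis using move_to_A[OF assms(1,3) sB] by auto
  qed auto
  then show "s \<in> C" using s assms(4) unfolding full_subcomplex_def by auto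
qed

lemma cycle_side:
  assumes fA: "flag A" and fB: "flag B" and sA: "\<sigma> \<in> A"
    and AB: "A \<inter> B = {\<tau>. \<tau> \<subseteq> \<sigma> \<and> \<tau> \<noteq> {}}"
    and cyc: "is_cycle C n" and full: "full_subcomplex (A \<union> B) C"
  shows "C \<subseteq> A \<or> C \<subseteq> B"
proof -
  have scA: "simplicial_complex A" and scB: "simplicial_complex B" using fA fB unfolding flag_def by blast+
  have BA: "B \<inter> A = {\<tau>. \<tau> \<subseteq> \<sigma> \<and> \<tau> \<noteq> {}}" using AB by blast
  obtain f where f: "3 \<le> n" "inj_on f {..<n}"
    and Ceq: "C = {{f i} | i. i < n} \<union> {{f i, f (Suc i mod n)} | i. i < n}"
    using cyc unfolding is_cycle_def by blast
  have CX: "C \<subseteq> A \<union> B" using full unfolding full_subcomplex_def by auto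
  have vert: "{f u} \<in> C" if "u < n" for u using that Ceq by blast
  have edg: "{f u, f (Suc u mod n)} \<in> C" if "u < n" for u using that Ceq by blast
  define PA where "PA u = ({f u} \<in> A)" for u
  define PB where "PB u = ({f u} \<in> B)" for u
  have cov: "\<forall>u<n. PA u \<or> PB u" using vert CX unfolding PA_def PB_def by blast
  have both: "(PA u \<and> PA (Suc u mod n)) \<or> (PB u \<and> PB (Suc u mod n))" if "u < n" for u
  proof -
    have "{f u, f (Suc u mod n)} \<in> A \<union> B" using edg[OF that] CX by auto
    then show ?thesis unfolding PA_def PB_def
      using sc_sub[OF scA, of "{f u, f (Suc u mod n)}"] sc_sub[OF scB, of "{f u, f (Suc u mod n)}"]
      by auto
  qed
  have edge: "\<forall>u<n. \<not>(PA u \<and> \<not>PB u \<and> PB (Suc u mod n) \<and> \<not>PA (Suc u mod n)) \<and>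
                      \<not>(PB u \<and> \<not>PA u \<and> PA (Suc u mod n) \<and> \<not>PB (Suc u mod n))"
    using both by blast
  have vC: "\<exists>u<n. y = f u" if "y \<in> \<Union>C" for y
  proof -
    have "n > 0" using f by auto
    then show ?thesis using that Ceq by (auto intro: mod_less_divisor)
  qed
  show ?thesis
  proof (cases "\<forall>u<n. PA u")
    case True
    have "C \<subseteq> A"
    proof
      fix c assume c: "c \<in> C"
      have "\<forall>y\<in>c. {y} \<in> A" using c vC True unfolding PA_def by blast
      then show "c \<in> A" using move_to_A[OF scB AB, of c] c CX by auto
    qed
    then show ?thesis by auto
  next
    case F1: False
    show ?thesis
    proof (cases "\<forall>u<n. PB u")
      case True
      have "C \<subseteq> B"
      proof
        fix c assume c: "c \<in> C"
        have "\<forall>y\<in>c. {y} \<in> B" using c vC True unfolding PB_def by blast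
        then show "c \<in> B" using move_to_A[OF scA BA, of c] c CX by auto
      qed
      then show ?thesis by auto
    next
      case False
      obtain j where j: "j < n" "\<not> PA j" "PB j" using F1 cov by blast
      obtain i where i: "i < n" "\<not> PB i" "PA i" using False cov by blast
      have "i \<noteq> j" using i j by auto
      then have "\<exists>p q. p < n \<and> q < n \<and> PA p \<and> PB p \<and> PA q \<and> PB q \<and> p \<noteq> q \<and>
         (\<forall>w<n. {p, q} \<noteq> {w, Suc w mod n})"
      proof (cases "i < j")
        case True then show ?thesis using comb[OF cov edge True j(1) i(3) i(2) j(3) j(2)] by blast
      next
        case False
        then have ji: "j < i" using \<open>i \<noteq> j\<close> by auto
        have cov': "\<forall>u<n. PB u \<or> PA u" using cov by blast
        have edge': "\<forall>u<n. \<not>(PB u \<and> \<not>PA u \<and> PA (Suc u mod n) \<and> \<not>PB (Suc u mod n)) \<and>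
                      \<not>(PA u \<and> \<not>PB u \<and> PB (Suc u mod n) \<and> \<not>PA (Suc u mod n))" using edge by blast
        show ?thesis using comb[OF cov' edge' ji i(1) j(3) j(2) i(3) i(2)] by blast
      qed
      then obtain p q where pq: "p < n" "q < n" "PA p" "PB p" "PA q" "PB q" "p \<noteq> q"
        "\<forall>w<n. {p, q} \<noteq> {w, Suc w mod n}" by blast
      have "f p \<in> \<sigma>" "f q \<in> \<sigma>" using pq AB unfolding PA_def PB_def by blast+
      then have "{f p, f q} \<in> A" using sc_sub[OF scA sA, of "{f p, f q}"] by auto
      moreover have "{f p, f q} \<subseteq> \<Union>C" using vert pq by blast
      ultimately have inC: "{f p, f q} \<in> C" using full unfolding full_subcomplex_def by blast
      have fpq: "f p \<noteq> f q" using f(2) pq by (meson inj_on_def lessThan_iff)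
      then show ?thesis
      proof -
        from inC Ceq fpq obtain w where w: "w < n" "{f p, f q} = {f w, f (Suc w mod n)}"
          by (auto simp: doubleton_eq_iff)
        have "Suc w mod n < n" using w by auto
        then have "{p, q} = {w, Suc w mod n}"
          using w(2) f(2) pq(1,2) w(1) unfolding doubleton_eq_iff inj_on_def by (metis lessThan_iff)
        then show ?thesis using pq(8) w(1) by blast
      qed
    qed
  qed
qed

theorem lemma2p3:
  fixes A B :: "'a set set" and \<sigma> :: "'a set" and k :: enat
  assumes "4 \<le> k"
    and "flag A" and "flag B"
    and "\<sigma> \<in> A" and "\<sigma> \<in> B"
    and "A \<inter> B = {\<tau>. \<tau> \<subseteq> \<sigma> \<and> \<tau> \<noteq> {}}"
  shows "k_large (A \<union> B) k \<longleftrightarrow> k_large A k \<and> k_large B k"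
proof -
  have scA: "simplicial_complex A" and scB: "simplicial_complex B" using assms(2,3) unfolding flag_def by blast+
  have BA: "B \<inter> A = {\<tau>. \<tau> \<subseteq> \<sigma> \<and> \<tau> \<noteq> {}}" using assms(6) by blast
  have fullA: "full_subcomplex A C" if "full_subcomplex (A \<union> B) C" "C \<subseteq> A" for C
    using that unfolding full_subcomplex_def by blast
  have fullB: "full_subcomplex B C" if "full_subcomplex (A \<union> B) C" "C \<subseteq> B" for C
    using that unfolding full_subcomplex_def by blast
  show ?thesis
  proof
    assume L: "k_large (A \<union> B) k"
    have "k_large A k"
      unfolding k_large_def
    proof (intro conjI notI)
      show "flag A" by fact
      assume "\<exists>C n. is_cycle C n \<and> full_subcomplex A C \<and> enat n < k"
      then obtain C n where "is_cycle C n" "full_subcomplex A C" "enat n < k" by blast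
      moreover have "full_subcomplex (A \<union> B) C" using full_up[OF scB scA assms(6)] calculation by blast
      ultimately show False using L unfolding k_large_def by blast
    qed
    moreover have "k_large B k"
      unfolding k_large_def
    proof (intro conjI notI)
      show "flag B" by fact
      assume "\<exists>C n. is_cycle C n \<and> full_subcomplex B C \<and> enat n < k"
      then obtain C n where "is_cycle C n" "full_subcomplex B C" "enat n < k" by blast
      moreover have "full_subcomplex (B \<union> A) C" using full_up[OF scA scB BA] calculation by blast
      then have "full_subcomplex (A \<union> B) C" by (simp add: Un_commute)
      ultimately show False using L unfolding k_large_def by blast
    qed
    ultimately show "k_large A k \<and> k_large B k" by blast
  next
    assume R: "k_large A k \<and> k_large B k"
    show "k_large (A \<union> B) k"
      unfolding k_large_def
    proof (intro conjI notI)
      show "flag (A \<union> B)" using X_flag[OF assms(2,3,6)] .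
      assume "\<exists>C n. is_cycle C n \<and> full_subcomplex (A \<union> B) C \<and> enat n < k"
      then obtain C n where C: "is_cycle C n" "full_subcomplex (A \<union> B) C" "enat n < k" by blast
      from cycle_side[OF assms(2,3,4,6) C(1,2)] show False
      proof
        assume "C \<subseteq> A" then show False using fullA[OF C(2)] C R unfolding k_large_def by blast
      next
        assume "C \<subseteq> B" then show False using fullB[OF C(2)] C R unfolding k_large_def by blast
      qed
    qed
  qed
qed

end
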